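(* If $G$ is a noncyclic finite $p$-group and $N$ is a normal subgroup of $G$ such that $\eta(G/N) = \eta(G)$, then $N \le G'$.
   Context: A cyclic subgroup $C$ of a group $G$ is maximal cyclic if there is no cyclic subgroup $D$ of $G$ with $C < D$. $\eta(G)$ denotes the number of conjugacy classes of maximal cyclic subgroups of $G$. $G'$ is the derived subgroup of $G$. *)

theory Defs
  imports "HOL-Algebra.Algebra"
begin

definition cyclic_subgroup :: "('a, 'b) monoid_scheme \<Rightarrow> 'a set \<Rightarrow> bool" where
  "cyclic_subgroup G C \<longleftrightarrow> (\<exists>g \<in> carrier G. C = generate G {g})"

definition maximal_cyclic_subgroup :: "('a, 'b) monoid_scheme \<Rightarrow> 'a set \<Rightarrow> bool" where
  "maximal_cyclic_subgroup G C \<longleftrightarrow>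
     cyclic_subgroup G C \<and> \<not> (\<exists>D. cyclic_subgroup G D \<and> C \<subset> D)"

definition conj_set :: "('a, 'b) monoid_scheme \<Rightarrow> 'a \<Rightarrow> 'a set \<Rightarrow> 'a set" where
  "conj_set G g C = (\<lambda>x. g \<otimes>\<^bsub>G\<^esub> x \<otimes>\<^bsub>G\<^esub> inv\<^bsub>G\<^esub> g) ` C"

definition conj_class :: "('a, 'b) monoid_scheme \<Rightarrow> 'a set \<Rightarrow> 'a set set" where
  "conj_class G C = (\<lambda>g. conj_set G g C) ` carrier G"

definition eta :: "('a, 'b) monoid_scheme \<Rightarrow> nat" where
  "eta G = card (conj_class G ` {C. maximal_cyclic_subgroup G C})"

end

theory Submission
  imports Defs
begin

lemma (in group_action) fixed_mod:
  assumes finG: "finite (carrier G)" and finE: "finite E" and p: "Factorial_Ring.prime p"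
    and ord: "order G = p ^ k"
  shows "card E mod p = card {x\<in>E. \<forall>g\<in>carrier G. \<phi> g x = x} mod p"
proof -
  let ?O = "orbits G E \<phi>"
  let ?F = "{x\<in>E. \<forall>g\<in>carrier G. \<phi> g x = x}"
  have finO: "finite ?O" using finE unfolding orbits_def by simp
  have "(\<Sum>orb\<in>?O. \<Sum>x\<in>orb. (1::nat)) = (\<Sum>x\<in>E. 1)" using disjoint_sum[OF finE] by blast
  then have cE: "card E = (\<Sum>orb\<in>?O. card orb)" by simp
  let ?O1 = "{orb\<in>?O. card orb = 1}" and ?O2 = "{orb\<in>?O. card orb \<noteq> 1}"
  have split: "(\<Sum>orb\<in>?O. card orb) = (\<Sum>orb\<in>?O1. card orb) + (\<Sum>orb\<in>?O2. card orb)"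
  proof -
    have "?O = ?O1 \<union> ?O2" by auto
    moreover have "(\<Sum>orb\<in>?O1 \<union> ?O2. card orb) = (\<Sum>orb\<in>?O1. card orb) + (\<Sum>orb\<in>?O2. card orb)"
      using finO by (intro sum.union_disjoint) auto
    ultimately show ?thesis by simp
  qed
  have "p dvd card orb" if o2: "orb \<in> ?O2" for orb
  proof -
    obtain x where x: "x \<in> E" "orb = orbit G \<phi> x" using o2 unfolding orbits_def by blast
    have "card orb * card (stabilizer G \<phi> x) = p ^ k" using orbit_stabilizer_theorem[OF x(1)] x ord by simp
    then have "card orb dvd p ^ k" by (metis dvd_triv_left)
    then obtain u where "card orb = p ^ u" using p by (auto simp: divides_primepow_nat)
    moreover have "card orb \<noteq> 1" using o2 by simp
    ultimately show ?thesis by (metis dvd_power power_0 neq0_conv)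
  qed
  then have d2: "p dvd (\<Sum>orb\<in>?O2. card orb)" by (intro dvd_sum) auto
  have s1: "(\<Sum>orb\<in>?O1. card orb) = card ?O1" by simp
  have "?O1 = (\<lambda>x. {x}) ` ?F"
  proof (rule Set.set_eqI, rule iffI)
    fix orb assume "orb \<in> ?O1"
    then obtain x where x: "x \<in> E" "orb = orbit G \<phi> x" "card orb = 1" unfolding orbits_def by blast
    have "x \<in> orb" using x orbit_refl by simp
    then have ox: "orb = {x}" using x(3) by (metis card_1_singletonE singletonD)
    have "\<forall>g\<in>carrier G. \<phi> g x = x"
    proof
      fix g assume "g \<in> carrier G"
      then have "\<phi> g x \<in> orb" using x unfolding orbit_def by blast
      then show "\<phi> g x = x" using ox by simp
    qed
    then show "orb \<in> (\<lambda>x. {x}) ` ?F" using x ox by blast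
  next
    fix orb assume "orb \<in> (\<lambda>x. {x}) ` ?F"
    then obtain x where x: "x \<in> ?F" "orb = {x}" by blast
    have grpG: "group G" using group_hom group_hom.axioms(1) by blast
    have one: "\<one> \<in> carrier G" using grpG by (simp add: group.is_monoid monoid.one_closed)
    have fx: "\<forall>g\<in>carrier G. \<phi> g x = x" using x by blast
    have "orbit G \<phi> x = {x}"
    proof (rule Set.set_eqI)
      fix y
      have "y \<in> orbit G \<phi> x \<longleftrightarrow> (\<exists>g. y = \<phi> g x \<and> g \<in> carrier G)" unfolding orbit_def by blast
      also have "... \<longleftrightarrow> y = x" using fx one by metis
      finally show "y \<in> orbit G \<phi> x \<longleftrightarrow> y \<in> {x}" by simp
    qed
    then show "orb \<in> ?O1" using x unfolding orbits_def by auto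
  qed
  then have "card ?O1 = card ?F" by (simp add: card_image)
  then have "card E = card ?F + (\<Sum>orb\<in>?O2. card orb)" using cE split s1 by simp
  then show ?thesis using d2 by (auto elim!: dvdE)
qed

lemma (in group) coset_action:
  assumes H: "subgroup H G"
  shows "group_action (G\<lparr>carrier := H\<rparr>) (rcosets H) (\<lambda>h. \<lambda>Y\<in>(rcosets H). Y #> inv h)"
proof -
  let ?E = "rcosets H"
  let ?phi = "\<lambda>h. \<lambda>Y\<in>(rcosets H). Y #> inv h"
  have Hc: "H \<subseteq> carrier G" using H subgroup.subset by blast
  have closed: "Y #> g \<in> ?E" if Y: "Y \<in> ?E" and g: "g \<in> carrier G" for Y g
  proof -
    obtain a where a: "a \<in> carrier G" "Y = H #> a" using Y unfolding RCOSETS_def by auto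
    have "Y #> g = H #> (a \<otimes> g)" using coset_mult_assoc[OF Hc a(1) g] a(2) by simp
    moreover have "a \<otimes> g \<in> carrier G" using a g by simp
    ultimately show ?thesis using Hc rcosetsI by metis
  qed
  have sub: "Y \<subseteq> carrier G" if "Y \<in> ?E" for Y
    using that Hc r_coset_subset_G unfolding RCOSETS_def by blast
  have bij: "?phi h \<in> Bij ?E" if h: "h \<in> H" for h
  proof -
    have hc: "h \<in> carrier G" using h Hc by blast
    have "bij_betw (\<lambda>Y. Y #> inv h) ?E ?E"
    proof (rule bij_betwI[where g = "\<lambda>Y. Y #> h"])
      show "(\<lambda>Y. Y #> inv h) \<in> ?E \<rightarrow> ?E" using closed hc by simp
      show "(\<lambda>Y. Y #> h) \<in> ?E \<rightarrow> ?E" using closed hc by simp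
      show "Y #> inv h #> h = Y" if "Y \<in> ?E" for Y
        using that sub hc by (simp add: coset_mult_assoc)
      show "Y #> h #> inv h = Y" if "Y \<in> ?E" for Y
        using that sub hc by (simp add: coset_mult_assoc)
    qed
    then show ?thesis unfolding Bij_def by (simp add: restrict_extensional)
  qed
  have grpK: "group (G\<lparr>carrier := H\<rparr>)" using subgroup_imp_group[OF H] .
  have hom: "?phi \<in> hom (G\<lparr>carrier := H\<rparr>) (BijGroup ?E)"
  proof (rule homI)
    show "?phi h \<in> carrier (BijGroup ?E)" if "h \<in> carrier (G\<lparr>carrier := H\<rparr>)" for h
      using bij that unfolding BijGroup_def by simp
    show "?phi (x \<otimes>\<^bsub>G\<lparr>carrier := H\<rparr>\<^esub> y) = ?phi x \<otimes>\<^bsub>BijGroup ?E\<^esub> ?phi y"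
      if "x \<in> carrier (G\<lparr>carrier := H\<rparr>)" "y \<in> carrier (G\<lparr>carrier := H\<rparr>)" for x y
    proof -
      have xy: "x \<in> H" "y \<in> H" using that by auto
      have xc: "x \<in> carrier G" and yc: "y \<in> carrier G" using xy Hc by auto
      have "?phi x \<otimes>\<^bsub>BijGroup ?E\<^esub> ?phi y = compose ?E (?phi x) (?phi y)"
        using bij xy unfolding BijGroup_def by simp
      also have "... = (\<lambda>Y\<in>?E. Y #> inv (x \<otimes> y))"
      proof (rule ext)
        fix Y show "compose ?E (?phi x) (?phi y) Y = (\<lambda>Y\<in>?E. Y #> inv (x \<otimes> y)) Y"
          using closed[of Y "inv y"] sub[of Y] xc yc
          by (auto simp: compose_def coset_mult_assoc inv_mult_group)
      qed
      finally show ?thesis by simp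
    qed
  qed
  show ?thesis unfolding group_action_def group_hom_def group_hom_axioms_def
    using grpK group_BijGroup hom by blast
qed

lemma (in group) pgroup_sub_card:
  assumes p: "Factorial_Ring.prime p" and ord: "order G = p ^ n" and H: "subgroup H G"
  shows "\<exists>k. card H = p ^ k"
proof -
  have "card H dvd p ^ n" using lagrange[OF H] ord by (metis dvd_triv_right)
  then show ?thesis using p by (auto simp: divides_primepow_nat)
qed

lemma (in group) norm_grow:
  assumes fin: "finite (carrier G)" and p: "Factorial_Ring.prime p" and ord: "order G = p ^ n"
    and H: "subgroup H G" and ne: "H \<noteq> carrier G"
  shows "\<exists>g\<in>carrier G. g \<notin> H \<and> (\<forall>h\<in>H. g \<otimes> h \<otimes> inv g \<in> H)"
proof -
  let ?K = "G\<lparr>carrier := H\<rparr>"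
  let ?E = "rcosets H"
  let ?phi = "\<lambda>h. \<lambda>Y\<in>(rcosets H). Y #> inv h"
  let ?F = "{Y\<in>?E. \<forall>h\<in>carrier ?K. ?phi h Y = Y}"
  have Hc: "H \<subseteq> carrier G" using H subgroup.subset by blast
  interpret A: group_action ?K ?E ?phi using coset_action[OF H] .
  obtain k where k: "card H = p ^ k" using pgroup_sub_card[OF p ord H] by blast
  have finH: "finite H" using fin Hc finite_subset by blast
  have finE: "finite ?E" using fin unfolding RCOSETS_def by simp
  have "order ?K = p ^ k" using k by (simp add: order_def)
  then have md: "card ?E mod p = card ?F mod p"
    using A.fixed_mod[OF _ finE p] finH by simp
  have cE: "card ?E * p ^ k = p ^ n" using lagrange[OF H] ord k by simp
  have p1: "p > 1" using p prime_gt_1_nat by blast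
  have "card ?E \<noteq> 1"
  proof
    assume "card ?E = 1"
    then have "card H = card (carrier G)" using lagrange[OF H] by (simp add: order_def)
    then show False using ne Hc fin by (metis card_subset_eq)
  qed
  moreover have "card ?E dvd p ^ n" using cE by (metis dvd_triv_left)
  ultimately have "p dvd card ?E" using p
    by (auto simp: divides_primepow_nat)
  then have pF: "p dvd card ?F" using md by (simp add: mod_eq_0_iff_dvd[symmetric])
  have HE: "H \<in> ?E" using rcosetsI[OF Hc one_closed] Hc by simp
  have HF: "H \<in> ?F"
  proof -
    have "H #> inv h = H" if hH: "h \<in> H" for h
    proof -
      have hc: "h \<in> carrier G" using hH Hc by blast
      show ?thesis using coset_join2[OF inv_closed[OF hc] H subgroup.m_inv_closed[OF H hH]] .
    qed
    then show ?thesis using HE by auto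
  qed
  have finF: "finite ?F" using finE by simp
  have "card ?F \<noteq> 0" using HF finF by auto
  then have pleF: "p \<le> card ?F" using pF by (simp add: dvd_imp_le)
  have "\<not> ?F \<subseteq> {H}"
  proof
    assume "?F \<subseteq> {H}"
    then have "card ?F \<le> card {H}" by (intro card_mono) auto
    then show False using pleF p1 by simp
  qed
  then obtain Y where Y: "Y \<in> ?F" "Y \<noteq> H" by blast
  have YE: "Y \<in> ?E" using Y(1) by blast
  obtain g where g: "g \<in> carrier G" "Y = H #> g" using YE unfolding RCOSETS_def by blast
  have gH: "g \<notin> H" using g Y(2) coset_join2[OF g(1) H] by blast
  have conj: "g \<otimes> h \<otimes> inv g \<in> H" if h: "h \<in> H" for h
  proof -
    have ih: "inv h \<in> H" using subgroup.m_inv_closed[OF H h] .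
    have hc: "h \<in> carrier G" using h Hc by blast
    have "\<forall>h\<in>carrier ?K. ?phi h Y = Y" using Y(1) by blast
    then have "?phi (inv h) Y = Y" using ih by auto
    then have "Y #> inv (inv h) = Y" using YE by simp
    then have "H #> (g \<otimes> h) = H #> g" using g hc coset_mult_assoc[OF Hc g(1) hc] by simp
    then have "H #> ((g \<otimes> h) \<otimes> inv g) = H" using coset_mult_inv2[OF _ _ g(1) Hc] g hc by simp
    then show ?thesis using coset_join1[OF _ _ H] g hc by simp
  qed
  show ?thesis using g gH conj by blast
qed

lemma (in group) conj_normalizer:
  assumes fin: "finite (carrier G)" and M: "subgroup M G" and g: "g \<in> carrier G"
    and c: "\<forall>h\<in>M. g \<otimes> h \<otimes> inv g \<in> M"
  shows "g \<in> normalizer G M"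
proof -
  have Mc: "M \<subseteq> carrier G" using M subgroup.subset by blast
  have img: "g <# M #> inv g = (\<lambda>h. g \<otimes> h \<otimes> inv g) ` M"
    unfolding l_coset_def r_coset_def by auto
  have inj: "inj_on (\<lambda>h. g \<otimes> h \<otimes> inv g) M"
  proof (rule inj_onI)
    fix h1 h2 assume h: "h1 \<in> M" "h2 \<in> M" "g \<otimes> h1 \<otimes> inv g = g \<otimes> h2 \<otimes> inv g"
    then have "g \<otimes> h1 = g \<otimes> h2" using Mc g by (meson inv_closed m_closed r_cancel subsetD)
    then show "h1 = h2" using Mc g h by (meson l_cancel subsetD)
  qed
  have finM: "finite M" using fin Mc finite_subset by blast
  have "(\<lambda>h. g \<otimes> h \<otimes> inv g) ` M \<subseteq> M" using c by blast
  moreover have "card ((\<lambda>h. g \<otimes> h \<otimes> inv g) ` M) = card M" using inj by (simp add: card_image)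
  ultimately have "(\<lambda>h. g \<otimes> h \<otimes> inv g) ` M = M" using finM by (simp add: card_subset_eq)
  then have "g <# M #> inv g = M" using img by simp
  then show ?thesis unfolding normalizer_def stabilizer_def using g Mc by simp
qed

lemma (in group) normalizer_conj:
  assumes M: "M \<subseteq> carrier G" and g: "g \<in> normalizer G M" and h: "h \<in> M"
  shows "g \<otimes> h \<otimes> inv g \<in> M"
proof -
  have "g <# M #> inv g = M" using g M unfolding normalizer_def stabilizer_def by simp
  moreover have "g \<otimes> h \<otimes> inv g \<in> g <# M #> inv g" using h unfolding l_coset_def r_coset_def by blast
  ultimately show ?thesis by simp
qed

lemma (in group) inv_cancel_left2 [simp]:
  "x \<in> carrier G \<Longrightarrow> y \<in> carrier G \<Longrightarrow> inv x \<otimes> (x \<otimes> y) = y"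
  by (simp add: m_assoc[symmetric])

lemma (in group) inv_cancel_left3 [simp]:
  "x \<in> carrier G \<Longrightarrow> y \<in> carrier G \<Longrightarrow> x \<otimes> (inv x \<otimes> y) = y"
  by (simp add: m_assoc[symmetric])

lemma (in group) comm_T_subgroup:
  assumes M: "M \<lhd> G" and x: "x \<in> carrier G"
  shows "subgroup {y\<in>carrier G. x \<otimes> y \<otimes> inv x \<otimes> inv y \<in> M} G"
proof -
  let ?T = "{y\<in>carrier G. x \<otimes> y \<otimes> inv x \<otimes> inv y \<in> M}"
  have nc: "\<And>z h. z \<in> carrier G \<Longrightarrow> h \<in> M \<Longrightarrow> z \<otimes> h \<otimes> inv z \<in> M"
    using M normal_inv_iff by blast
  have sM: "subgroup M G" using M normal_imp_subgroup by blast
  have Mc: "M \<subseteq> carrier G" using sM subgroup.subset by blast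
  show ?thesis
  proof (rule subgroupI)
    show "?T \<subseteq> carrier G" by blast
    have "x \<otimes> \<one> \<otimes> inv x \<otimes> inv \<one> = \<one>" using x by simp
    then show "?T \<noteq> {}" using subgroup.one_closed[OF sM] by (metis (mono_tags, lifting) empty_iff mem_Collect_eq one_closed)
  next
    fix y assume yT: "y \<in> ?T"
    then have y: "y \<in> carrier G" and c: "x \<otimes> y \<otimes> inv x \<otimes> inv y \<in> M" by auto
    have ic: "inv (x \<otimes> y \<otimes> inv x \<otimes> inv y) \<in> M" using subgroup.m_inv_closed[OF sM c] .
    have "inv y \<otimes> inv (x \<otimes> y \<otimes> inv x \<otimes> inv y) \<otimes> inv (inv y) \<in> M" using nc[OF inv_closed[OF y] ic] .
    moreover have "inv y \<otimes> inv (x \<otimes> y \<otimes> inv x \<otimes> inv y) \<otimes> inv (inv y) = x \<otimes> inv y \<otimes> inv x \<otimes> inv (inv y)"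
      using x y by (simp add: inv_mult_group m_assoc)
    ultimately show "inv y \<in> ?T" using y by simp
  next
    fix y1 y2 assume "y1 \<in> ?T" "y2 \<in> ?T"
    then have y: "y1 \<in> carrier G" "y2 \<in> carrier G" and c: "x \<otimes> y1 \<otimes> inv x \<otimes> inv y1 \<in> M" "x \<otimes> y2 \<otimes> inv x \<otimes> inv y2 \<in> M" by auto
    have "y1 \<otimes> (x \<otimes> y2 \<otimes> inv x \<otimes> inv y2) \<otimes> inv y1 \<in> M" using nc[OF y(1) c(2)] .
    then have "(x \<otimes> y1 \<otimes> inv x \<otimes> inv y1) \<otimes> (y1 \<otimes> (x \<otimes> y2 \<otimes> inv x \<otimes> inv y2) \<otimes> inv y1) \<in> M"
      using subgroup.m_closed[OF sM c(1)] by blast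
    moreover have "(x \<otimes> y1 \<otimes> inv x \<otimes> inv y1) \<otimes> (y1 \<otimes> (x \<otimes> y2 \<otimes> inv x \<otimes> inv y2) \<otimes> inv y1) = x \<otimes> (y1 \<otimes> y2) \<otimes> inv x \<otimes> inv (y1 \<otimes> y2)"
      using x y by (simp add: inv_mult_group m_assoc r_inv_ex l_inv)
    ultimately show "y1 \<otimes> y2 \<in> ?T" using y by simp
  qed
qed

lemma (in group) L1:
  assumes fin: "finite (carrier G)" and p: "Factorial_Ring.prime p" and ord: "order G = p ^ n"
    and a: "a \<in> carrier G"
    and gen: "\<forall>g\<in>carrier G. \<exists>d\<in>derived G (carrier G). \<exists>k::int. g = d \<otimes> a [^] k"
  shows "carrier G = generate G {a}"
proof (rule ccontr)
  assume ne: "carrier G \<noteq> generate G {a}"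
  have ga: "subgroup (generate G {a}) G" using generate_is_subgroup[of "{a}"] a by blast
  let ?Hs = "{K. subgroup K G \<and> generate G {a} \<subseteq> K \<and> K \<noteq> carrier G}"
  have finHs: "finite ?Hs"
  proof (rule finite_subset)
    show "?Hs \<subseteq> Pow (carrier G)"
    proof
      fix K assume "K \<in> ?Hs"
      then have "subgroup K G" by blast
      then show "K \<in> Pow (carrier G)" using subgroup.subset by blast
    qed
    show "finite (Pow (carrier G))" using fin by simp
  qed
  have gaHs: "generate G {a} \<in> ?Hs" using ga ne by simp
  define m where "m = Max (card ` ?Hs)"
  have "card ` ?Hs \<noteq> {}" using gaHs by blast
  then have "m \<in> card ` ?Hs" unfolding m_def using finHs by (intro Max_in) simp_all
  then obtain M where MHs: "M \<in> ?Hs" and cM: "card M = m" by blast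
  have Mmax: "card K \<le> card M" if KH: "K \<in> ?Hs" for K
  proof -
    have "card K \<in> card ` ?Hs" using KH by (rule imageI)
    from Max_ge[OF finite_imageI[OF finHs] this] show ?thesis using cM m_def by simp
  qed
  have sM: "subgroup M G" and aM: "generate G {a} \<subseteq> M" and Mne: "M \<noteq> carrier G" using MHs by blast+
  have Mc: "M \<subseteq> carrier G" using sM subgroup.subset by blast
  have maxM: "K = carrier G" if K: "subgroup K G" "M \<subseteq> K" "K \<noteq> M" for K
  proof (rule ccontr)
    assume "K \<noteq> carrier G"
    then have "K \<in> ?Hs" using K aM by blast
    then have "card K \<le> card M" using Mmax by blast
    moreover have "finite K" using K(1) subgroup.subset fin finite_subset by blast
    ultimately have "M = K" using K(2) card_mono[OF _ K(2)] card_subset_eq[OF _ K(2)] by (meson le_antisym)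
    then show False using K(3) by simp
  qed
  have nM: "M \<lhd> G"
  proof -
    let ?N = "normalizer G M"
    have sN: "subgroup ?N G" using normalizer_imp_subgroup[OF Mc] .
    have MN: "M \<subseteq> ?N"
    proof
      fix h assume h: "h \<in> M"
      have hc: "h \<in> carrier G" using h Mc by blast
      have "\<forall>k\<in>M. h \<otimes> k \<otimes> inv h \<in> M"
        using h sM by (simp add: subgroup.m_closed subgroup.m_inv_closed)
      then show "h \<in> ?N" using conj_normalizer[OF fin sM hc] by blast
    qed
    obtain g where g: "g \<in> carrier G" "g \<notin> M" "\<forall>h\<in>M. g \<otimes> h \<otimes> inv g \<in> M"
      using norm_grow[OF fin p ord sM Mne] by blast
    have "g \<in> ?N" using conj_normalizer[OF fin sM g(1) g(3)] .
    then have "?N \<noteq> M" using g(2) by blast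
    then have NG: "?N = carrier G" using maxM[OF sN MN] by blast
    have "\<forall>x\<in>carrier G. \<forall>h\<in>M. x \<otimes> h \<otimes> inv x \<in> M"
      using normalizer_conj[OF Mc] NG by blast
    then show ?thesis using sM normal_inv_iff by blast
  qed
  have nc: "\<And>z h. z \<in> carrier G \<Longrightarrow> h \<in> M \<Longrightarrow> z \<otimes> h \<otimes> inv z \<in> M"
    using nM normal_inv_iff by blast
  have dsM: "derived_set G (carrier G) \<subseteq> M"
  proof (intro subsetI)
    fix c assume "c \<in> derived_set G (carrier G)"
    then obtain x y where x: "x \<in> carrier G" and y: "y \<in> carrier G" and c: "c = x \<otimes> y \<otimes> inv x \<otimes> inv y" by blast
    let ?T = "{y\<in>carrier G. x \<otimes> y \<otimes> inv x \<otimes> inv y \<in> M}"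
    have sT: "subgroup ?T G" using comm_T_subgroup[OF nM x] .
    show "c \<in> M"
    proof (cases "x \<in> M")
      case True
      have "y \<otimes> inv x \<otimes> inv y \<in> M" using nc[OF y subgroup.m_inv_closed[OF sM True]] .
      then have "x \<otimes> (y \<otimes> inv x \<otimes> inv y) \<in> M" using subgroup.m_closed[OF sM True] by blast
      then show ?thesis using c x y by (simp add: m_assoc)
    next
      case False
      have MT: "M \<subseteq> ?T"
      proof
        fix h assume h: "h \<in> M"
        have hc: "h \<in> carrier G" using h Mc by blast
        have "x \<otimes> h \<otimes> inv x \<otimes> inv h \<in> M"
          using subgroup.m_closed[OF sM nc[OF x h] subgroup.m_inv_closed[OF sM h]] .
        then show "h \<in> ?T" using hc by blast
      qed
      have "x \<otimes> x \<otimes> inv x \<otimes> inv x = \<one>" using x by (simp add: m_assoc)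
      then have "x \<in> ?T" using x subgroup.one_closed[OF sM] by simp
      then have "?T \<noteq> M" using False by blast
      then have "?T = carrier G" using maxM[OF sT MT] by blast
      then show ?thesis using y c by blast
    qed
  qed
  have dM: "derived G (carrier G) \<subseteq> M"
    unfolding derived_def using generate_subgroup_incl[OF dsM sM] .
  have "carrier G \<subseteq> M"
  proof
    fix g assume g: "g \<in> carrier G"
    then obtain d k where d: "d \<in> derived G (carrier G)" and gd: "g = d \<otimes> a [^] (k::int)" using gen by blast
    have "a [^] k \<in> generate G {a}" using generate_pow[OF a] by blast
    then have "a [^] k \<in> M" using aM by blast
    moreover have "d \<in> M" using d dM by blast
    ultimately show "g \<in> M" using gd subgroup.m_closed[OF sM] by blast
  qed
  then show False using Mc Mne by blast
qed

lemma nt_lemma: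
  fixes i j :: int and p t :: nat
  assumes p: "Factorial_Ring.prime p" and h1: "int (p ^ t) dvd i * int p" and h2: "\<not> int (p ^ t) dvd j"
  shows "\<exists>m. int (p ^ t) dvd i - j * m"
proof -
  have t: "t \<ge> 1" using h2 by (cases t) auto
  have pp: "int p \<noteq> 0" using p by (simp add: prime_gt_0_nat)
  have "int (p ^ (t - 1)) * int p dvd i * int p"
    using h1 t by (metis One_nat_def Suc_diff_1 less_le_trans zero_less_one of_nat_mult power_Suc2)
  then have d1: "int (p ^ (t - 1)) dvd i" using pp by (simp add: dvd_mult_cancel_right)
  define g where "g = gcd j (int (p ^ t))"
  have "nat g dvd p ^ t" unfolding g_def
    by (metis gcd_dvd2 nat_dvd_iff int_nat_eq  gcd_ge_0_int of_nat_le_0_iff nat_int)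
  then obtain u where u: "u \<le> t" "nat g = p ^ u" using p by (auto simp: divides_primepow_nat)
  have g0: "g \<ge> 0" unfolding g_def by simp
  have gu: "g = int (p ^ u)" using u g0 by (metis int_nat_eq of_nat_0_le_iff nat_int) 
  have "u \<noteq> t" proof
    assume "u = t" then have "int (p^t) dvd j" using gu unfolding g_def by (metis gcd_dvd1)
    then show False using h2 by simp
  qed
  then have "p ^ u dvd p ^ (t - 1)" using u by (simp add: le_imp_power_dvd)
  then have "g dvd i" using d1 gu by (metis dvd_trans of_nat_dvd_iff)
  then obtain i' where i': "i = g * i'" by auto
  obtain a b where ab: "a * j + b * int (p ^ t) = g" unfolding g_def using bezout_int by blast
  have "i - j * (a * i') = b * int (p ^ t) * i'" 
  proof -
    have e1: "i - j * (a * i') = (g - a * j) * i'" using i' by (simp add: algebra_simps)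
    have "g - a * j = b * int (p ^ t)" using ab by linarith
    then show ?thesis using e1 by simp
  qed
  then show ?thesis by (metis dvd_triv_right dvd_mult2)
qed

lemma (in group) cyc_lemma:
  assumes p: "Factorial_Ring.prime p" and d: "d \<in> carrier G" and od: "ord d = p ^ t"
    and c: "c \<in> generate G {d}" and cp: "c [^] p = \<one>"
    and z: "z \<in> generate G {d}" and z1: "z \<noteq> \<one>"
  shows "c \<in> generate G {z}"
proof -
  obtain i :: int where ci: "c = d [^] i" using c generate_pow[OF d] by auto
  obtain j :: int where zj: "z = d [^] j" using z generate_pow[OF d] by auto
  have "d [^] (i * int p) = \<one>" using cp ci d by (metis int_pow_int int_pow_pow)
  then have h1: "int (p ^ t) dvd i * int p" using int_pow_eq_id[OF d] od by simp
  have h2: "\<not> int (p ^ t) dvd j" using int_pow_eq_id[OF d] od z1 zj by simp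
  obtain m where m: "int (p ^ t) dvd i - j * m" using nt_lemma[OF p h1 h2] by blast
  have "c = d [^] (j * m)" using ci int_pow_eq[OF d, of "j * m" i] m od by simp
  also have "... = z [^] m" using zj d by (simp add: int_pow_pow)
  finally have "c = z [^] m" .
  moreover have zc: "z \<in> carrier G" using z d generate_in_carrier by blast
  ultimately show ?thesis using generate_pow[OF zc] by blast
qed

lemma (in group) gen_sub_gen:
  assumes "a \<in> generate G {d}" "d \<in> carrier G"
  shows "generate G {a} \<subseteq> generate G {d}"
  using assms generate_subgroup_incl generate_is_subgroup by (metis empty_subsetI insert_subset)

lemma (in comm_group) AL:
  assumes fin: "finite (carrier G)" and p: "Factorial_Ring.prime p"
    and pg: "\<forall>y\<in>carrier G. \<exists>s. ord y = p ^ s"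
    and z: "z \<in> carrier G" "z \<noteq> \<one>"
    and H: "\<forall>y\<in>carrier G. \<exists>d\<in>carrier G. y \<in> generate G {d} \<and> z \<in> generate G {d}"
  shows "\<exists>a\<in>carrier G. carrier G = generate G {a}"
proof -
  define M where "M = Max (ord ` carrier G)"
  have "M \<in> ord ` carrier G" unfolding M_def using fin z by (intro Max_in) auto
  then obtain a where a: "a \<in> carrier G" "ord a = M" by auto
  have amax: "ord y \<le> ord a" if "y \<in> carrier G" for y
    using a that fin unfolding M_def by (metis Max_ge finite_imageI imageI)
  have fing: "finite (generate G {x})" if "x \<in> carrier G" for x
    using fin generate_in_carrier that by (meson empty_subsetI finite_subset insert_subset subsetI)
  have step1: "z \<in> generate G {a}"
  proof -
    obtain d where d: "d \<in> carrier G" "a \<in> generate G {d}" "z \<in> generate G {d}" using H a by blast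
    have sub: "generate G {a} \<subseteq> generate G {d}" using gen_sub_gen d by blast
    have "card (generate G {d}) \<le> card (generate G {a})"
      using generate_pow_card[OF d(1)] generate_pow_card[OF a(1)] amax[OF d(1)] by simp
    then have "generate G {a} = generate G {d}" using sub fing[OF d(1)] by (simp add: card_seteq)
    then show ?thesis using d by simp
  qed
  have step2: "c \<in> generate G {a}" if c: "c \<in> carrier G" "c [^] p = \<one>" for c
  proof -
    obtain d where d: "d \<in> carrier G" "c \<in> generate G {d}" "z \<in> generate G {d}" using H c by blast
    obtain t where t: "ord d = p ^ t" using pg d by blast
    have "c \<in> generate G {z}" using cyc_lemma[OF p d(1) t d(2) c(2) d(3) z(2)] .
    moreover have "generate G {z} \<subseteq> generate G {a}" using gen_sub_gen[OF step1 a(1)] .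
    ultimately show ?thesis by blast
  qed
  have step3: "\<forall>b\<in>carrier G. ord b = n \<longrightarrow> b \<in> generate G {a}" for n
  proof (induction n rule: less_induct)
    case (less n)
    show ?case
    proof (intro ballI impI)
      fix b assume b: "b \<in> carrier G" "ord b = n"
      obtain s where s: "ord b = p ^ s" using pg b by blast
      show "b \<in> generate G {a}"
      proof (cases s)
        case 0
        then have "b = \<one>" using s ord_eq_1 b by simp
        then show ?thesis using generate.one by blast
      next
        case (Suc s')
        have p1: "p > 1" using p prime_gt_1_nat by blast
        have "ord (b [^] p) = ord b div p" using ord_pow[OF b(1), of p] s Suc p1 by simp
        also have "... = p ^ s'" using s Suc p1 by simp
        finally have obp: "ord (b [^] p) = p ^ s'" .
        have "p ^ s' < ord b" using s Suc p1 by simp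
        then have "b [^] p \<in> generate G {a}" using less.IH b obp by auto
        moreover have "ord a \<noteq> 0" using ord_ge_1[OF fin a(1)] by simp
        ultimately obtain k :: nat where k: "b [^] p = a [^] k" using generate_pow_nat[OF a(1)] by auto
        obtain t where t: "ord a = p ^ t" using pg a by blast
        have "p dvd k"
        proof (rule ccontr)
          assume nd: "\<not> p dvd k"
          then have k0: "k \<noteq> 0" by (metis dvd_0_right)
          have "coprime (p ^ t) k" using nd p by (simp add: prime_imp_coprime)
          then have "gcd (ord a) k = 1" using t by simp
          then have "ord (a [^] k) = ord a" using ord_pow_gen[OF a(1), of k] k0 by simp
          then have "ord (b [^] p) = ord a" using k by simp
          then show False using obp amax[OF b(1)] \<open>p ^ s' < ord b\<close> by simp
        qed
        then obtain j where j: "k = p * j" by blast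
        define c where "c = b \<otimes> inv (a [^] j)"
        have cc: "c \<in> carrier G" unfolding c_def using a b by simp
        have "c [^] p = b [^] p \<otimes> inv (a [^] j) [^] p"
          unfolding c_def using a b by (simp add: pow_mult_distrib m_comm)
        also have "... = a [^] k \<otimes> inv (a [^] k)"
          using k j a by (simp add: nat_pow_inv nat_pow_pow mult.commute)
        also have "... = \<one>" using a by simp
        finally have "c \<in> generate G {a}" using step2 cc by blast
        moreover have "a [^] j \<in> generate G {a}" using generate_pow_nat[OF a(1) \<open>ord a \<noteq> 0\<close>] by blast
        ultimately have "c \<otimes> a [^] j \<in> generate G {a}" by (rule generate.eng)
        moreover have "c \<otimes> a [^] j = b" unfolding c_def using a b by (simp add: m_assoc)
        ultimately show ?thesis by simp
      qed
    qed
  qed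
  have "carrier G = generate G {a}"
    using step3 generate_in_carrier a by (metis empty_subsetI insert_subset subsetI subset_antisym)
  then show ?thesis using a by blast
qed

lemma (in group) inv_cancel_left2b [simp]:
  "x \<in> carrier G \<Longrightarrow> y \<in> carrier G \<Longrightarrow> inv x \<otimes> (x \<otimes> y) = y"
  by (simp add: m_assoc[symmetric])

lemma (in group) inv_cancel_left3b [simp]:
  "x \<in> carrier G \<Longrightarrow> y \<in> carrier G \<Longrightarrow> x \<otimes> (inv x \<otimes> y) = y"
  by (simp add: m_assoc[symmetric])

lemma (in group) cyclic_sub_carrier:
  assumes "cyclic_subgroup G C" shows "C \<subseteq> carrier G"
  using assms unfolding cyclic_subgroup_def by (auto intro: generate_in_carrier)

lemma (in group) exists_max_cyclic:
  assumes fin: "finite (carrier G)" and g: "g \<in> carrier G"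
  shows "\<exists>h\<in>carrier G. generate G {g} \<subseteq> generate G {h} \<and> maximal_cyclic_subgroup G (generate G {h})"
proof -
  let ?Cs = "{C. cyclic_subgroup G C \<and> generate G {g} \<subseteq> C}"
  have finCs: "finite ?Cs"
  proof (rule finite_subset)
    show "?Cs \<subseteq> Pow (carrier G)"
    proof
      fix C assume "C \<in> ?Cs"
      then have "cyclic_subgroup G C" by blast
      then show "C \<in> Pow (carrier G)" using cyclic_sub_carrier by blast
    qed
    show "finite (Pow (carrier G))" using fin by simp
  qed
  have gCs: "generate G {g} \<in> ?Cs" using g unfolding cyclic_subgroup_def by blast
  define m where "m = Max (card ` ?Cs)"
  have "card ` ?Cs \<noteq> {}" using gCs by blast
  then have "m \<in> card ` ?Cs" unfolding m_def using finCs by (intro Max_in) simp_all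
  then obtain C where CCs: "C \<in> ?Cs" and cC: "card C = m" by blast
  have Cmax: "card K \<le> card C" if KH: "K \<in> ?Cs" for K
  proof -
    have "card K \<in> card ` ?Cs" using KH by (rule imageI)
    from Max_ge[OF finite_imageI[OF finCs] this] show ?thesis using cC m_def by simp
  qed
  have cycC: "cyclic_subgroup G C" and gC: "generate G {g} \<subseteq> C" using CCs by blast+
  obtain h where h: "h \<in> carrier G" "C = generate G {h}" using cycC unfolding cyclic_subgroup_def by blast
  have "maximal_cyclic_subgroup G C"
    unfolding maximal_cyclic_subgroup_def
  proof (intro conjI notI cycC)
    assume "\<exists>D. cyclic_subgroup G D \<and> C \<subset> D"
    then obtain D where D: "cyclic_subgroup G D" "C \<subset> D" by blast
    then have "D \<in> ?Cs" using gC by blast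
    then have "card D \<le> card C" using Cmax by blast
    moreover have "finite D" using D(1) cyclic_sub_carrier fin finite_subset by blast
    ultimately show False using D(2) psubset_card_mono by (metis not_le)
  qed
  then show ?thesis using h gC by blast
qed

lemma (in group) conj_hom:
  assumes g: "g \<in> carrier G"
  shows "group_hom G G (\<lambda>x. g \<otimes> x \<otimes> inv g)"
proof -
  have "(\<lambda>x. g \<otimes> x \<otimes> inv g) \<in> hom G G"
  proof (rule homI)
    show "g \<otimes> x \<otimes> inv g \<in> carrier G" if "x \<in> carrier G" for x using g that by simp
    show "g \<otimes> (x \<otimes> y) \<otimes> inv g = g \<otimes> x \<otimes> inv g \<otimes> (g \<otimes> y \<otimes> inv g)"
      if "x \<in> carrier G" "y \<in> carrier G" for x y using g that by (simp add: m_assoc)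
  qed
  then show ?thesis unfolding group_hom_def group_hom_axioms_def using is_group by blast
qed

lemma (in group) conj_set_img: "conj_set G g C = (\<lambda>x. g \<otimes> x \<otimes> inv g) ` C"
  unfolding conj_set_def by simp

lemma (in group) conj_set_generate:
  assumes g: "g \<in> carrier G" and h: "h \<in> carrier G"
  shows "conj_set G g (generate G {h}) = generate G {g \<otimes> h \<otimes> inv g}"
proof -
  interpret c: group_hom G G "\<lambda>x. g \<otimes> x \<otimes> inv g" using conj_hom[OF g] .
  have "generate G ((\<lambda>x. g \<otimes> x \<otimes> inv g) ` {h}) = (\<lambda>x. g \<otimes> x \<otimes> inv g) ` generate G {h}"
    using c.generate_img[of "{h}"] h by simp
  then show ?thesis unfolding conj_set_img by simp
qed

lemma (in group) conj_set_inv: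
  assumes g: "g \<in> carrier G" and S: "S \<subseteq> carrier G"
  shows "conj_set G (inv g) (conj_set G g S) = S"
proof -
  have "inv g \<otimes> (g \<otimes> x \<otimes> inv g) \<otimes> inv (inv g) = x" if "x \<in> S" for x
    using g S that by (simp add: m_assoc subsetD)
  then show ?thesis unfolding conj_set_img image_image by simp
qed

lemma (in group) conj_set_carrier:
  assumes g: "g \<in> carrier G" and S: "S \<subseteq> carrier G"
  shows "conj_set G g S \<subseteq> carrier G"
  using g S unfolding conj_set_img by auto

lemma (in group) cyclic_conj:
  assumes g: "g \<in> carrier G" and C: "cyclic_subgroup G C"
  shows "cyclic_subgroup G (conj_set G g C)"
proof -
  obtain h where h: "h \<in> carrier G" "C = generate G {h}" using C unfolding cyclic_subgroup_def by blast
  then show ?thesis using conj_set_generate[OF g h(1)] g unfolding cyclic_subgroup_def by auto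
qed

lemma (in group) max_cyclic_conj:
  assumes g: "g \<in> carrier G" and C: "maximal_cyclic_subgroup G C"
  shows "maximal_cyclic_subgroup G (conj_set G g C)"
proof -
  have cC: "cyclic_subgroup G C" using C unfolding maximal_cyclic_subgroup_def by blast
  have Cc: "C \<subseteq> carrier G" using cyclic_sub_carrier[OF cC] .
  show ?thesis unfolding maximal_cyclic_subgroup_def
  proof (intro conjI notI cyclic_conj[OF g cC])
    assume "\<exists>D. cyclic_subgroup G D \<and> conj_set G g C \<subset> D"
    then obtain D where D: "cyclic_subgroup G D" "conj_set G g C \<subset> D" by blast
    have Dc: "D \<subseteq> carrier G" using cyclic_sub_carrier[OF D(1)] .
    have ig: "inv g \<in> carrier G" using g by simp
    have "C = conj_set G (inv g) (conj_set G g C)" using conj_set_inv[OF g Cc] by simp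
    also have "... \<subset> conj_set G (inv g) D"
    proof -
      have "conj_set G (inv g) (conj_set G g C) \<subseteq> conj_set G (inv g) D"
        using D(2) unfolding conj_set_img by blast
      moreover have "conj_set G (inv g) (conj_set G g C) \<noteq> conj_set G (inv g) D"
      proof
        assume "conj_set G (inv g) (conj_set G g C) = conj_set G (inv g) D"
        then have "conj_set G (inv (inv g)) (conj_set G (inv g) (conj_set G g C)) = conj_set G (inv (inv g)) (conj_set G (inv g) D)" by simp
        then have "conj_set G g C = D"
          using conj_set_inv[OF ig Dc] conj_set_inv[OF ig conj_set_carrier[OF g Cc]] g by simp
        then show False using D(2) by simp
      qed
      ultimately show ?thesis by blast
    qed
    finally have "C \<subset> conj_set G (inv g) D" .
    moreover have "cyclic_subgroup G (conj_set G (inv g) D)" using cyclic_conj[OF ig D(1)] .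
    ultimately show False using C unfolding maximal_cyclic_subgroup_def by blast
  qed
qed

lemma (in group) quot_hom:
  assumes N: "N \<lhd> G"
  shows "group_hom G (G Mod N) ((#>) N)"
proof -
  have "group (G Mod N)" using N normal.factorgroup_is_group by blast
  moreover have "((#>) N) \<in> hom G (G Mod N)" using normal.r_coset_hom_Mod[OF N] by simp
  ultimately show ?thesis unfolding group_hom_def group_hom_axioms_def using is_group by blast
qed

lemma (in group) quot_carrier:
  assumes N: "N \<lhd> G"
  shows "carrier (G Mod N) = (#>) N ` carrier G"
  unfolding FactGroup_def RCOSETS_def by auto

lemma (in group) quot_generate:
  assumes N: "N \<lhd> G" and h: "h \<in> carrier G"
  shows "(#>) N ` generate G {h} = generate (G Mod N) {N #> h}"
proof -
  interpret q: group_hom G "G Mod N" "(#>) N" using quot_hom[OF N] .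
  show ?thesis using q.generate_img[of "{h}"] h by simp
qed

lemma (in group) quot_conj_set:
  assumes N: "N \<lhd> G" and g: "g \<in> carrier G" and C: "C \<subseteq> carrier G"
  shows "conj_set (G Mod N) (N #> g) ((#>) N ` C) = (#>) N ` conj_set G g C"
proof -
  interpret q: group_hom G "G Mod N" "(#>) N" using quot_hom[OF N] .
  have "N #> (g \<otimes> x \<otimes> inv g) = (N #> g) \<otimes>\<^bsub>G Mod N\<^esub> (N #> x) \<otimes>\<^bsub>G Mod N\<^esub> inv\<^bsub>G Mod N\<^esub> (N #> g)"
    if x: "x \<in> carrier G" for x
    using g x q.hom_mult q.hom_inv by simp
  then show ?thesis unfolding conj_set_def image_image using C by (auto simp: subsetD intro!: image_cong)
qed

lemma (in group) quot_conj_class: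
  assumes N: "N \<lhd> G" and C: "C \<subseteq> carrier G"
  shows "conj_class (G Mod N) ((#>) N ` C) = (\<lambda>S. (#>) N ` S) ` conj_class G C"
proof -
  have "conj_class (G Mod N) ((#>) N ` C) = (\<lambda>g. conj_set (G Mod N) (N #> g) ((#>) N ` C)) ` carrier G"
    unfolding conj_class_def quot_carrier[OF N] image_image by simp
  also have "... = (\<lambda>g. (#>) N ` conj_set G g C) ` carrier G"
    using quot_conj_set[OF N _ C] by (intro image_cong) auto
  also have "... = (\<lambda>S. (#>) N ` S) ` conj_class G C"
    unfolding conj_class_def image_image by simp
  finally show ?thesis .
qed

lemma (in group) self_in_conj_class:
  assumes "S \<subseteq> carrier G" shows "S \<in> conj_class G S"
proof -
  have "conj_set G \<one> S = S" using assms unfolding conj_set_img by (auto simp: subsetD image_iff)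
  then show ?thesis unfolding conj_class_def by force
qed

lemma (in group) eta_eq_prop:
  assumes fin: "finite (carrier G)" and N: "N \<lhd> G" and eq: "eta (G Mod N) = eta G"
    and h: "h \<in> carrier G" and mc: "maximal_cyclic_subgroup G (generate G {h})" and n: "n \<in> N"
  shows "\<exists>g\<in>carrier G. h \<otimes> n \<in> conj_set G g (generate G {h})"
proof -
  let ?Q = "G Mod N"
  let ?pi = "(#>) N"
  interpret q: group_hom G ?Q ?pi using quot_hom[OF N] .
  have grpQ: "group ?Q" by (rule q.H.is_group)
  let ?MG = "{C. maximal_cyclic_subgroup G C}"
  let ?MQ = "{D. maximal_cyclic_subgroup ?Q D}"
  let ?T = "conj_class G ` ?MG"
  let ?F = "\<lambda>K. (\<lambda>S. ?pi ` S) ` K"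
  have MGsub: "?MG \<subseteq> Pow (carrier G)"
    using cyclic_sub_carrier unfolding maximal_cyclic_subgroup_def by blast
  have finT: "finite ?T" using finite_subset[OF MGsub] fin by simp
  have ccF: "conj_class ?Q (?pi ` C) = ?F (conj_class G C)" if "C \<subseteq> carrier G" for C
    using quot_conj_class[OF N that] by simp
  have claim1: "conj_class ?Q ` ?MQ \<subseteq> ?F ` ?T"
  proof
    fix K assume "K \<in> conj_class ?Q ` ?MQ"
    then obtain D where D: "maximal_cyclic_subgroup ?Q D" and K: "K = conj_class ?Q D" by blast
    obtain q where q: "q \<in> carrier ?Q" "D = generate ?Q {q}"
      using D unfolding maximal_cyclic_subgroup_def cyclic_subgroup_def by blast
    obtain g where g: "g \<in> carrier G" "q = N #> g" using q(1) quot_carrier[OF N] by auto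
    obtain h' where h': "h' \<in> carrier G" "generate G {g} \<subseteq> generate G {h'}"
      "maximal_cyclic_subgroup G (generate G {h'})" using exists_max_cyclic[OF fin g(1)] by blast
    have "D = ?pi ` generate G {g}" using quot_generate[OF N g(1)] q g by simp
    also have "... \<subseteq> ?pi ` generate G {h'}" using h'(2) by blast
    also have "... = generate ?Q {N #> h'}" using quot_generate[OF N h'(1)] .
    finally have Dsub: "D \<subseteq> generate ?Q {N #> h'}" .
    have "cyclic_subgroup ?Q (generate ?Q {N #> h'})"
      unfolding cyclic_subgroup_def using h'(1) quot_carrier[OF N] by blast
    then have "D = generate ?Q {N #> h'}" using D Dsub unfolding maximal_cyclic_subgroup_def by blast
    then have "D = ?pi ` generate G {h'}" using quot_generate[OF N h'(1)] by simp
    then have "K = ?F (conj_class G (generate G {h'}))"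
      using K ccF generate_in_carrier h'(1) by (metis empty_subsetI insert_subset subsetI)
    then show "K \<in> ?F ` ?T" using h'(3) by blast
  qed
  have finFT: "finite (?F ` ?T)" using finT by simp
  have c1: "card (?F ` ?T) \<le> card ?T" using card_image_le[OF finT] .
  have c2: "card (conj_class ?Q ` ?MQ) \<le> card (?F ` ?T)" using card_mono[OF finFT claim1] .
  have "card (conj_class ?Q ` ?MQ) = card ?T" using eq unfolding eta_def by simp
  then have c3: "card (?F ` ?T) = card ?T" and c4: "card (conj_class ?Q ` ?MQ) = card (?F ` ?T)"
    using c1 c2 by linarith+
  have FT: "?F ` ?T = conj_class ?Q ` ?MQ" using card_subset_eq[OF finFT claim1 c4] by simp
  have injF: "inj_on ?F ?T" using eq_card_imp_inj_on[OF finT c3] .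
  let ?C = "generate G {h}"
  have Cc: "?C \<subseteq> carrier G" using generate_in_carrier h by (metis empty_subsetI insert_subset subsetI)
  have hn: "h \<otimes> n \<in> carrier G" using h n N normal_imp_subgroup subgroup.subset by blast
  obtain h2 where h2: "h2 \<in> carrier G" "generate G {h \<otimes> n} \<subseteq> generate G {h2}"
    "maximal_cyclic_subgroup G (generate G {h2})" using exists_max_cyclic[OF fin hn] by blast
  let ?D = "generate G {h2}"
  have Dc: "?D \<subseteq> carrier G" using generate_in_carrier h2(1) by (metis empty_subsetI insert_subset subsetI)
  have nc: "n \<in> carrier G" using n N normal_imp_subgroup subgroup.subset by blast
  have "N #> n = N" using coset_join2[OF nc normal_imp_subgroup[OF N] n] .
  then have pn1: "?pi n = \<one>\<^bsub>?Q\<^esub>" by (simp add: FactGroup_def)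
  have pin: "?pi (h \<otimes> n) = ?pi h"
  proof -
    have "?pi (h \<otimes> n) = ?pi h \<otimes>\<^bsub>?Q\<^esub> ?pi n" by (rule q.hom_mult[OF h nc])
    also have "... = ?pi h" using pn1 q.H.r_one[OF q.hom_closed[OF h]] by simp
    finally show ?thesis .
  qed
  have "?pi ` ?C = generate ?Q {N #> (h \<otimes> n)}" using quot_generate[OF N h] pin by simp
  also have "... = ?pi ` generate G {h \<otimes> n}" using quot_generate[OF N hn] by simp
  also have "... \<subseteq> ?pi ` ?D" using h2(2) by blast
  finally have CD: "?pi ` ?C \<subseteq> ?pi ` ?D" .
  have "?F (conj_class G ?C) \<in> conj_class ?Q ` ?MQ" using FT mc by blast
  then obtain D' where D': "maximal_cyclic_subgroup ?Q D'" "?F (conj_class G ?C) = conj_class ?Q D'" by blast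
  have piCc: "?pi ` ?C \<subseteq> carrier ?Q" using Cc q.hom_closed by blast
  have "?pi ` ?C \<in> conj_class ?Q (?pi ` ?C)" using group.self_in_conj_class[OF grpQ piCc] .
  then have "?pi ` ?C \<in> conj_class ?Q D'" using D'(2) ccF[OF Cc] by simp
  then obtain q where q: "q \<in> carrier ?Q" "?pi ` ?C = conj_set ?Q q D'" unfolding conj_class_def by blast
  have mpiC: "maximal_cyclic_subgroup ?Q (?pi ` ?C)" using group.max_cyclic_conj[OF grpQ q(1) D'(1)] q(2) by simp
  have "cyclic_subgroup ?Q (?pi ` ?D)"
    unfolding cyclic_subgroup_def using quot_generate[OF N h2(1)] q.hom_closed[OF h2(1)] by blast
  then have eqCD: "?pi ` ?C = ?pi ` ?D" using mpiC CD unfolding maximal_cyclic_subgroup_def by blast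
  have e1: "?F (conj_class G ?C) = ?F (conj_class G ?D)" using ccF[OF Cc] ccF[OF Dc] eqCD by simp
  have e2: "conj_class G ?C \<in> ?T" using mc by blast
  have e3: "conj_class G ?D \<in> ?T" using h2(3) by blast
  have "conj_class G ?C = conj_class G ?D" using inj_onD[OF injF e1 e2 e3] .
  then have "?D \<in> conj_class G ?C" using self_in_conj_class[OF Dc] by simp
  then obtain g where g: "g \<in> carrier G" "?D = conj_set G g ?C" unfolding conj_class_def by blast
  have "h \<otimes> n \<in> ?D" using h2(2) generate.incl[of "h \<otimes> n" "{h \<otimes> n}" G] by blast
  then show ?thesis using g by blast
qed

lemma (in comm_group) conj_triv:
  assumes "u \<in> carrier G" "v \<in> carrier G" shows "u \<otimes> v \<otimes> inv u = v"
proof -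
  have "u \<otimes> v \<otimes> inv u = v \<otimes> u \<otimes> inv u" using assms m_comm by simp
  also have "... = v" using assms by (simp add: m_assoc)
  finally show ?thesis .
qed

lemma (in group) main_lemma:
  assumes fin: "finite (carrier G)" and p: "Factorial_Ring.prime p" and ord: "order G = p ^ n"
    and ncyc: "\<not> cyclic_group G" and nN: "N \<lhd> G" and eq: "eta (G Mod N) = eta G"
  shows "N \<subseteq> derived G (carrier G)"
proof -
  let ?D = "derived G (carrier G)"
  let ?A = "G Mod ?D"
  let ?psi = "(#>) ?D"
  have nD: "?D \<lhd> G" by (rule derived_self_is_normal)
  have sD: "subgroup ?D G" using normal_imp_subgroup[OF nD] .
  interpret A: comm_group ?A by (rule derived_quot_is_comm_group)
  interpret psi: group_hom G ?A ?psi using quot_hom[OF nD] .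
  have Nc: "N \<subseteq> carrier G" using normal_imp_subgroup[OF nN] subgroup.subset by blast
  have finA: "finite (carrier ?A)" using quot_carrier[OF nD] fin by simp
  have pgA: "\<forall>y\<in>carrier ?A. \<exists>s. A.ord y = p ^ s"
  proof
    fix y assume y: "y \<in> carrier ?A"
    have "order ?A = card (rcosets ?D)" by (simp add: order_def FactGroup_def)
    then have "order ?A * card ?D = p ^ n" using lagrange[OF sD] ord by simp
    then have "order ?A dvd p ^ n" by (metis dvd_triv_left)
    moreover have "A.ord y dvd order ?A" using A.ord_dvd_group_order[OF y] .
    ultimately have "A.ord y dvd p ^ n" by (rule dvd_trans[rotated])
    then show "\<exists>s. A.ord y = p ^ s" using p by (auto simp: divides_primepow_nat)
  qed
  show "N \<subseteq> ?D"
  proof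
    fix x assume xN: "x \<in> N"
    have xc: "x \<in> carrier G" using xN Nc by blast
    show "x \<in> ?D"
    proof (rule ccontr)
      assume xD: "x \<notin> ?D"
      let ?z = "?psi x"
      have zc: "?z \<in> carrier ?A" using psi.hom_closed[OF xc] .
      have z1: "?z \<noteq> \<one>\<^bsub>?A\<^esub>"
      proof
        assume "?z = \<one>\<^bsub>?A\<^esub>"
        then have "?D #> x = ?D" by (simp add: FactGroup_def)
        then show False using coset_join1[OF _ xc sD] xD by blast
      qed
      have HA: "\<forall>y\<in>carrier ?A. \<exists>d\<in>carrier ?A. y \<in> generate ?A {d} \<and> ?z \<in> generate ?A {d}"
      proof
        fix y assume y: "y \<in> carrier ?A"
        obtain g where g: "g \<in> carrier G" "y = ?psi g" using y quot_carrier[OF nD] by auto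
        obtain h where h: "h \<in> carrier G" "generate G {g} \<subseteq> generate G {h}"
          "maximal_cyclic_subgroup G (generate G {h})" using exists_max_cyclic[OF fin g(1)] by blast
        have hc: "?psi h \<in> carrier ?A" using psi.hom_closed[OF h(1)] .
        have genh: "?psi ` generate G {h} = generate ?A {?psi h}" using quot_generate[OF nD h(1)] .
        have "g \<in> generate G {g}" by (rule generate.incl) simp
        then have "y \<in> generate ?A {?psi h}" using g h(2) genh by blast
        moreover have "?z \<in> generate ?A {?psi h}"
        proof -
          obtain c where c: "c \<in> carrier G" "h \<otimes> x \<in> conj_set G c (generate G {h})"
            using eta_eq_prop[OF fin nN eq h(1) h(3) xN] by blast
          then obtain w where w: "w \<in> generate G {h}" "h \<otimes> x = c \<otimes> w \<otimes> inv c"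
            unfolding conj_set_def by blast
          have wc: "w \<in> carrier G" using w(1) generate_in_carrier h(1) by (metis empty_subsetI insert_subset)
          have "?psi h \<otimes>\<^bsub>?A\<^esub> ?z = ?psi (h \<otimes> x)" using psi.hom_mult[OF h(1) xc] by simp
          also have "... = ?psi c \<otimes>\<^bsub>?A\<^esub> ?psi w \<otimes>\<^bsub>?A\<^esub> inv\<^bsub>?A\<^esub> (?psi c)"
            using w(2) c(1) wc psi.hom_mult psi.hom_inv by simp
          also have "... = ?psi w"
            using A.conj_triv[OF psi.hom_closed[OF c(1)] psi.hom_closed[OF wc]] .
          finally have e: "?psi h \<otimes>\<^bsub>?A\<^esub> ?z = ?psi w" .
          have zeq: "?z = inv\<^bsub>?A\<^esub> (?psi h) \<otimes>\<^bsub>?A\<^esub> ?psi w"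
            using e hc zc psi.hom_closed[OF wc] by (metis A.inv_solve_left A.m_closed)
          have wg: "?psi w \<in> generate ?A {?psi h}" using w(1) genh by blast
          have hg: "?psi h \<in> generate ?A {?psi h}" by (rule generate.incl) simp
          have sg: "subgroup (generate ?A {?psi h}) ?A" using A.generate_is_subgroup hc by simp
          have ihg: "inv\<^bsub>?A\<^esub> (?psi h) \<in> generate ?A {?psi h}" using subgroup.m_inv_closed[OF sg hg] .
          show ?thesis unfolding zeq using subgroup.m_closed[OF sg ihg wg] .
        qed
        ultimately show "\<exists>d\<in>carrier ?A. y \<in> generate ?A {d} \<and> ?z \<in> generate ?A {d}" using hc by blast
      qed
      obtain c where c: "c \<in> carrier ?A" "carrier ?A = generate ?A {c}"
        using A.AL[OF finA p pgA zc z1 HA] by blast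
      obtain a where a: "a \<in> carrier G" "c = ?psi a" using c(1) quot_carrier[OF nD] by auto
      have gen: "\<forall>g\<in>carrier G. \<exists>d\<in>?D. \<exists>k::int. g = d \<otimes> a [^] k"
      proof
        fix g assume g: "g \<in> carrier G"
        have "?psi g \<in> generate ?A {?psi a}" using psi.hom_closed[OF g] c a by simp
        then obtain w where w: "w \<in> generate G {a}" "?psi g = ?psi w" using quot_generate[OF nD a(1)] by auto
        obtain k :: int where k: "w = a [^] k" using w(1) generate_pow[OF a(1)] by blast
        have wc: "w \<in> carrier G" using k a by simp
        have "g \<in> ?D #> w" using repr_independenceD[OF sD g] w(2) by simp
        then obtain d where "d \<in> ?D" "g = d \<otimes> w" unfolding r_coset_def by blast
        then show "\<exists>d\<in>?D. \<exists>k::int. g = d \<otimes> a [^] k" using k by blast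
      qed
      have "carrier G = generate G {a}" using L1[OF fin p ord a(1) gen] .
      then have "carrier G = range (\<lambda>k::int. a [^] k)" using generate_pow[OF a(1)] by auto
      then have "cyclic_group G" using cyclic_group a(1) by blast
      then show False using ncyc by blast
    qed
  qed
qed

theorem corollary4p4:
  fixes G :: "('a, 'b) monoid_scheme" and N :: "'a set" and p n :: nat
  assumes "group G"
    and "finite (carrier G)"
    and "Factorial_Ring.prime p"
    and "card (carrier G) = p ^ n"
    and "\<not> cyclic_group G"
    and "N \<lhd> G"
    and "eta (G Mod N) = eta G"
  shows "N \<subseteq> derived G (carrier G)"
proof -
  have ord: "order G = p ^ n" using assms(4) by (simp add: order_def)
  show ?thesis using group.main_lemma[OF assms(1) assms(2) assms(3) ord assms(5) assms(6) assms(7)] .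
qed

end
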